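(* The bidisc $\mathbb{D}\times\mathbb{D}$ and the domain $\Omega_1=\{(u,v)\in\mathbb{C}^2: |u^2|+|v^2|-1<|u^2+v^2-1|\}$ are biholomorphic.
   Context: $\mathbb{D}$ is the open unit disc in $\mathbb{C}$. *)

theory Defs
  imports "HOL-Analysis.Analysis"
begin

text \<open>Holomorphy for maps between open subsets of C^2, with C^2 modelled as complex \<times> complex:
  f is holomorphic on S iff at every point of S it is (real) Frechet differentiable
  and its derivative is complex linear, i.e. commutes with multiplication by i.\<close>
definition holomorphic2_on ::
  "(complex \<times> complex \<Rightarrow> complex \<times> complex) \<Rightarrow> (complex \<times> complex) set \<Rightarrow> bool" where
  "holomorphic2_on f S \<longleftrightarrow>
     (\<forall>z\<in>S. \<exists>f'. (f has_derivative f') (at z) \<and>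
        (\<forall>a b. f' (\<i> * a, \<i> * b) = (\<i> * fst (f' (a, b)), \<i> * snd (f' (a, b)))))"

definition biholomorphic2 :: "(complex \<times> complex) set \<Rightarrow> (complex \<times> complex) set \<Rightarrow> bool" where
  "biholomorphic2 A B \<longleftrightarrow>
     (\<exists>f g. holomorphic2_on f A \<and> holomorphic2_on g B \<and>
            f ` A \<subseteq> B \<and> g ` B \<subseteq> A \<and>
            (\<forall>z\<in>A. g (f z) = z) \<and> (\<forall>w\<in>B. f (g w) = w))"

definition unit_disc :: "complex set" where
  "unit_disc = ball 0 1"

definition Omega1 :: "(complex \<times> complex) set" where
  "Omega1 = {(u, v). norm (u^2) + norm (v^2) - 1 < norm (u^2 + v^2 - 1)}"

end

theory Submission
  imports Defs
begin

definition CD :: "(complex \<times> complex \<Rightarrow> complex) \<Rightarrow> complex \<times> complex \<Rightarrow> bool" where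
  "CD h z \<longleftrightarrow> (\<exists>A B. (h has_derivative (\<lambda>p. A * fst p + B * snd p)) (at z))"

lemma CD_const: "CD (\<lambda>_. c) z"
  unfolding CD_def
  by (rule exI[of _ 0], rule exI[of _ 0]) (auto intro: has_derivative_eq_rhs[OF has_derivative_const])

lemma CD_fst: "CD fst z"
  unfolding CD_def
  by (rule exI[of _ 1], rule exI[of _ 0]) (auto intro: has_derivative_eq_rhs[OF has_derivative_fst[OF has_derivative_ident]])

lemma CD_snd: "CD snd z"
  unfolding CD_def
  by (rule exI[of _ 0], rule exI[of _ 1]) (auto intro: has_derivative_eq_rhs[OF has_derivative_snd[OF has_derivative_ident]])

lemma CD_add: "CD f z \<Longrightarrow> CD g z \<Longrightarrow> CD (\<lambda>x. f x + g x) z"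
  unfolding CD_def
proof (elim exE)
  fix A B C D
  assume "(f has_derivative (\<lambda>p. A * fst p + B * snd p)) (at z)"
     "(g has_derivative (\<lambda>p. C * fst p + D * snd p)) (at z)"
  from has_derivative_add[OF this]
  show "\<exists>A B. ((\<lambda>x. f x + g x) has_derivative (\<lambda>p. A * fst p + B * snd p)) (at z)"
    by (intro exI[of _ "A + C"] exI[of _ "B + D"]) (auto elim!: has_derivative_eq_rhs simp: algebra_simps)
qed

lemma CD_mult: "CD f z \<Longrightarrow> CD g z \<Longrightarrow> CD (\<lambda>x. f x * g x) z"
  unfolding CD_def
proof (elim exE)
  fix A B C D
  assume "(f has_derivative (\<lambda>p. A * fst p + B * snd p)) (at z)"
     "(g has_derivative (\<lambda>p. C * fst p + D * snd p)) (at z)"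
  from has_derivative_mult[OF this]
  show "\<exists>A B. ((\<lambda>x. f x * g x) has_derivative (\<lambda>p. A * fst p + B * snd p)) (at z)"
    by (intro exI[of _ "f z * C + A * g z"] exI[of _ "f z * D + B * g z"])
      (auto elim!: has_derivative_eq_rhs simp: algebra_simps)
qed

lemma CD_compose:
  assumes "CD f z" "(g has_field_derivative D) (at (f z))"
  shows "CD (\<lambda>x. g (f x)) z"
  using assms(1) unfolding CD_def
proof (elim exE)
  fix A B
  assume "(f has_derivative (\<lambda>p. A * fst p + B * snd p)) (at z)"
  from has_derivative_compose[OF this assms(2)[unfolded has_field_derivative_def]]
  show "\<exists>A B. ((\<lambda>x. g (f x)) has_derivative (\<lambda>p. A * fst p + B * snd p)) (at z)"
    by (intro exI[of _ "D * A"] exI[of _ "D * B"])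
      (auto elim!: has_derivative_eq_rhs simp: algebra_simps)
qed

lemma CD_inverse: "CD f z \<Longrightarrow> f z \<noteq> 0 \<Longrightarrow> CD (\<lambda>x. inverse (f x)) z"
  by (rule CD_compose, assumption, rule DERIV_inverse)

lemma CD_divide: "CD f z \<Longrightarrow> CD g z \<Longrightarrow> g z \<noteq> 0 \<Longrightarrow> CD (\<lambda>x. f x / g x) z"
  unfolding divide_inverse by (intro CD_mult CD_inverse)

lemma CD_diff: "CD f z \<Longrightarrow> CD g z \<Longrightarrow> CD (\<lambda>x. f x - g x) z"
proof -
  assume "CD f z" "CD g z"
  then have "CD (\<lambda>x. f x + (-1) * g x) z" by (intro CD_add CD_mult CD_const)
  then show ?thesis by simp
qed

lemma CD_csqrt: "CD f z \<Longrightarrow> f z \<notin> \<real>\<^sub>\<le>\<^sub>0 \<Longrightarrow> CD (\<lambda>x. csqrt (f x)) z"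
  by (rule CD_compose, assumption, rule has_field_derivative_csqrt)

lemma holo2I:
  assumes "\<And>z. z \<in> S \<Longrightarrow> CD (\<lambda>x. fst (f x)) z \<and> CD (\<lambda>x. snd (f x)) z"
  shows "holomorphic2_on f S"
  unfolding holomorphic2_on_def
proof
  fix z assume "z \<in> S"
  with assms obtain A B C D where
    1: "((\<lambda>x. fst (f x)) has_derivative (\<lambda>p. A * fst p + B * snd p)) (at z)" and
    2: "((\<lambda>x. snd (f x)) has_derivative (\<lambda>p. C * fst p + D * snd p)) (at z)"
    unfolding CD_def by blast
  from has_derivative_Pair[OF 1 2]
  have "(f has_derivative (\<lambda>p. (A * fst p + B * snd p, C * fst p + D * snd p))) (at z)" by simp
  then show "\<exists>f'. (f has_derivative f') (at z) \<and>
        (\<forall>a b. f' (\<i> * a, \<i> * b) = (\<i> * fst (f' (a, b)), \<i> * snd (f' (a, b))))"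
    by (intro exI[of _ "\<lambda>p. (A * fst p + B * snd p, C * fst p + D * snd p)"]) (auto simp: algebra_simps)
qed


definition Fm :: "complex \<times> complex \<Rightarrow> complex \<times> complex" where
  "Fm = (\<lambda>(z, w). ((z + w) / (1 + z * w), \<i> * (z - w) / (1 + z * w)))"

lemma para: "(norm (a + b))^2 + (norm (a - b))^2 = 2 * (norm a)^2 + 2 * (norm (b::complex)) ^2"
  by (simp only: cmod_power2) (simp add: power2_eq_square algebra_simps)

lemma para2: "(norm (1 + p))^2 + (norm (1 - p))^2 = 2 + 2 * (norm (p::complex))^2"
  using para[of 1 p] by simp

lemma divN: "(N::real) > 0 \<Longrightarrow> (a/N + b/N - 1 < c/N) = (a+b-N<c)"
  by (smt (verit, ccfv_SIG) diff_divide_distrib divide_less_eq_1_pos)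

lemma Fm_Omega:
  assumes nz: "1 + z * w \<noteq> 0"
  shows "Fm (z, w) \<in> Omega1 \<longleftrightarrow> (1 - (norm z)^2) * (1 - (norm w)^2) > 0"
proof -
  define N where "N = (norm (1 + z * w))^2"
  have Npos: "N > 0" using nz by (simp add: N_def)
  have e1: "norm (((z + w) / (1 + z * w))^2) = (norm (z + w))^2 / N"
    by (simp add: N_def norm_divide norm_power power_divide)
  have e2: "norm ((\<i> * (z - w) / (1 + z * w))^2) = (norm (z - w))^2 / N"
    by (simp add: N_def norm_divide norm_power power_divide norm_mult)
  have e3: "((z + w) / (1 + z * w))^2 + (\<i> * (z - w) / (1 + z * w))^2 - 1 = - ((1 - z * w)^2 / (1 + z*w)^2)"
    using nz by (simp add: power_divide power_mult_distrib divide_simps) (simp add: power2_eq_square algebra_simps)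
  have e4: "norm (- ((1 - z * w)^2 / (1 + z*w)^2)) = (norm (1 - z * w))^2 / N"
    by (simp add: N_def norm_divide norm_power)
  have "Fm (z, w) \<in> Omega1 \<longleftrightarrow> (norm (z + w))^2 / N + (norm (z - w))^2 / N - 1 < (norm (1 - z * w))^2 / N"
    unfolding Fm_def Omega1_def using e1 e2 e3 e4 by simp
  also have "\<dots> \<longleftrightarrow> (norm (z + w))^2 + (norm (z - w))^2 - N < (norm (1 - z * w))^2"
    using Npos by (rule divN)
  also have "\<dots> \<longleftrightarrow> 2 * (norm z)^2 + 2 * (norm w)^2 < 2 + 2 * (norm (z * w))^2"
    using para[of z w] para2[of "z * w"] unfolding N_def by linarith
  also have "\<dots> \<longleftrightarrow> (1 - (norm z)^2) * (1 - (norm w)^2) > 0"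
    by (simp add: norm_mult power_mult_distrib algebra_simps) arith
  finally show ?thesis .
qed


definition Gm :: "complex \<times> complex \<Rightarrow> complex \<times> complex" where
  "Gm = (\<lambda>(u, v). ((u - \<i> * v) / (1 + csqrt (1 - u^2 - v^2)),
                    (u + \<i> * v) / (1 + csqrt (1 - u^2 - v^2))))"

lemma Omega_notin:
  assumes "(u, v) \<in> Omega1"
  shows "1 - u^2 - v^2 \<notin> \<real>\<^sub>\<le>\<^sub>0"
proof
  assume "1 - u^2 - v^2 \<in> \<real>\<^sub>\<le>\<^sub>0"
  then have r: "Re (1 - u^2 - v^2) \<le> 0" "Im (1 - u^2 - v^2) = 0"
    by (auto simp: complex_nonpos_Reals_iff)
  define t where "t = u^2 + v^2"
  have t: "t = of_real (Re t)" "Re t \<ge> 1" using r unfolding t_def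
    by (auto simp: complex_eq_iff)
  have "t - 1 = of_real (Re t - 1)" using t(1) by (metis of_real_1 of_real_diff)
  then have "norm (t - 1) = norm (of_real (Re t - 1) :: complex)" by simp
  also have "\<dots> = Re t - 1" using t(2) by (simp del: of_real_diff)
  finally have n1: "norm (t - 1) = Re t - 1" .
  have n2: "norm t = Re t" using t by (metis abs_of_nonneg norm_of_real order_trans zero_le_one)
  have "norm t \<le> norm (u^2) + norm (v^2)" unfolding t_def by (rule norm_triangle_ineq)
  moreover have "norm (u^2) + norm (v^2) - 1 < norm (t - 1)"
    using assms unfolding Omega1_def t_def by simp
  ultimately show False using n1 n2 by linarith
qed

lemma Re_csqrt_pos:
  assumes "z \<notin> \<real>\<^sub>\<le>\<^sub>0"
  shows "Re (csqrt z) > 0"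
proof (rule ccontr)
  assume "\<not> Re (csqrt z) > 0"
  then have "Re (csqrt z) = 0" using Re_csqrt[of z] by linarith
  then have "csqrt z = \<i> * of_real (Im (csqrt z))" by (simp add: complex_eq_iff)
  then have "z = - of_real ((Im (csqrt z))^2)"
    by (metis power2_csqrt power_mult_distrib power2_i mult_minus1 of_real_power)
  moreover have "z = - of_real (y^2) \<Longrightarrow> z \<in> \<real>\<^sub>\<le>\<^sub>0" for y
    by (simp add: complex_nonpos_Reals_iff)
  ultimately have "z \<in> \<real>\<^sub>\<le>\<^sub>0" by blast
  with assms show False by simp
qed

lemma Rpos_facts:
  assumes "Re R > 0"
  shows "1 + R \<noteq> 0" "norm (1 - R) < norm (1 + R)"
proof -
  show "1 + R \<noteq> 0" using assms by (auto simp: complex_eq_iff)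
  have "(norm (1 - R))^2 < (norm (1 + R))^2"
    using assms by (simp only: cmod_power2) (simp add: power2_eq_square algebra_simps)
  then show "norm (1 - R) < norm (1 + R)"
    by (rule power_less_imp_less_base) simp
qed


lemma FG:
  assumes "(u, v) \<in> Omega1"
  defines "R \<equiv> csqrt (1 - u^2 - v^2)"
  shows "Fm (Gm (u, v)) = (u, v)" and "1 + fst (Gm (u, v)) * snd (Gm (u, v)) \<noteq> 0"
    and "norm (fst (Gm (u, v)) * snd (Gm (u, v))) < 1"
proof -
  have Rp: "Re R > 0" unfolding R_def by (rule Re_csqrt_pos[OF Omega_notin[OF assms(1)]])
  note nz = Rpos_facts(1)[OF Rp]
  have R2: "R^2 = 1 - u^2 - v^2" unfolding R_def by simp
  define z where "z = (u - \<i> * v) / (1 + R)"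
  define w where "w = (u + \<i> * v) / (1 + R)"
  have G: "Gm (u, v) = (z, w)" unfolding Gm_def z_def w_def R_def by simp
  have "z * w = (u^2 + v^2) / (1 + R)^2"
    unfolding z_def w_def by (simp add: power2_eq_square algebra_simps)
  also have "\<dots> = (1 - R^2) / (1 + R)^2" using R2 by simp
  also have "\<dots> = ((1 - R) * (1 + R)) / ((1 + R) * (1 + R))"
    by (simp add: power2_eq_square algebra_simps)
  also have "\<dots> = (1 - R) / (1 + R)" using nz by simp
  finally have zw: "z * w = (1 - R) / (1 + R)" .
  have zw1: "1 + z * w = 2 / (1 + R)" unfolding zw using nz by (simp add: field_simps)
  show "1 + fst (Gm (u, v)) * snd (Gm (u, v)) \<noteq> 0" using zw1 nz unfolding G by simp
  show "norm (fst (Gm (u, v)) * snd (Gm (u, v))) < 1" unfolding G fst_conv snd_conv zw using Rpos_facts(2)[OF Rp] nz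
    by (simp add: norm_divide divide_less_eq)
  have "z + w = ((u - \<i> * v) + (u + \<i> * v)) / (1 + R)" unfolding z_def w_def
    by (simp only: add_divide_distrib)
  also have "\<dots> = 2 * u / (1 + R)" by (intro arg_cong2[where f="(/)"]) (simp_all add: algebra_simps)
  finally have r1: "(z + w) / (1 + z * w) = u" unfolding zw1 using nz by simp
  have "\<i> * (z - w) = \<i> * ((u - \<i> * v - (u + \<i> * v)) / (1 + R))" unfolding z_def w_def
    by (subst diff_divide_distrib[of "u - \<i> * v" "u + \<i> * v"]) (rule refl)
  also have "\<dots> = (\<i> * (u - \<i> * v - (u + \<i> * v))) / (1 + R)" by (rule times_divide_eq_right)
  also have "\<dots> = 2 * v / (1 + R)" by (intro arg_cong2[where f="(/)"]) (simp_all add: algebra_simps)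
  finally have r2: "\<i> * (z - w) / (1 + z * w) = v" unfolding zw1 using nz by simp
  from r1 r2 show "Fm (Gm (u, v)) = (u, v)" unfolding G Fm_def by simp
qed

lemma GF:
  assumes "norm z < 1" "norm w < 1"
  shows "Gm (Fm (z, w)) = (z, w)"
proof -
  define p where "p = z * w"
  have p1: "norm p < 1" unfolding p_def using assms
    by (metis norm_mult_less vector_space_over_itself.scale_one)
  have nz: "1 + p \<noteq> 0"
  proof
    assume "1 + p = 0" then have "p = -1" by (simp add: add_eq_0_iff)
    with p1 show False by simp
  qed
  define u where "u = (z + w) / (1 + p)"
  define v where "v = \<i> * (z - w) / (1 + p)"
  have F: "Fm (z, w) = (u, v)" unfolding Fm_def u_def v_def p_def by simp
  have e: "1 - u^2 - v^2 = ((1 - p) / (1 + p))^2" unfolding u_def v_def p_def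
    using nz[unfolded p_def] by (simp add: power_divide power_mult_distrib divide_simps) (simp add: power2_eq_square algebra_simps)
  have "Re ((1 - p) / (1 + p)) = (1 - (norm p)^2) / (norm (1 + p))^2"
    by (simp only: Re_divide cmod_power2) (simp add: power2_eq_square algebra_simps)
  moreover have "1 - (norm p)^2 > 0" using p1 by (simp add: abs_square_less_1)
  ultimately have "Re ((1 - p) / (1 + p)) > 0" using nz by simp
  then have R: "csqrt (1 - u^2 - v^2) = (1 - p) / (1 + p)" unfolding e
    by (intro csqrt_unique) auto
  have R1: "1 + csqrt (1 - u^2 - v^2) = 2 / (1 + p)" unfolding R using nz by (simp add: field_simps)
  have "u - \<i> * v = ((z + w) - \<i> * (\<i> * (z - w))) / (1 + p)" unfolding u_def v_def
    by (simp only: diff_divide_distrib times_divide_eq_right)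
  also have "\<dots> = 2 * z / (1 + p)" by (intro arg_cong2[where f="(/)"]) (simp_all add: algebra_simps)
  finally have g1: "(u - \<i> * v) / (1 + csqrt (1 - u^2 - v^2)) = z" unfolding R1 using nz
    by simp
  have "u + \<i> * v = ((z + w) + \<i> * (\<i> * (z - w))) / (1 + p)" unfolding u_def v_def
    by (simp only: add_divide_distrib times_divide_eq_right)
  also have "\<dots> = 2 * w / (1 + p)" by (simp add: algebra_simps)
  finally have g2: "(u + \<i> * v) / (1 + csqrt (1 - u^2 - v^2)) = w" unfolding R1 using nz
    by simp
  show ?thesis unfolding F Gm_def using g1 g2 by simp
qed


lemma Fm_alt: "Fm x = ((fst x + snd x) / (1 + fst x * snd x), \<i> * (fst x - snd x) / (1 + fst x * snd x))"
  by (cases x) (simp add: Fm_def)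

lemma Gm_alt: "Gm x = ((fst x - \<i> * snd x) / (1 + csqrt (1 - fst x * fst x - snd x * snd x)),
                    (fst x + \<i> * snd x) / (1 + csqrt (1 - fst x * fst x - snd x * snd x)))"
  by (cases x) (simp add: Gm_def power2_eq_square)

lemma D_prod: "norm (z::complex) < 1 \<Longrightarrow> norm w < 1 \<Longrightarrow> norm (z * w) < 1"
  by (metis norm_mult_less vector_space_over_itself.scale_one)

lemma D_nz: "norm (z::complex) < 1 \<Longrightarrow> norm w < 1 \<Longrightarrow> 1 + z * w \<noteq> 0"
proof
  assume "norm z < 1" "norm w < 1" "1 + z * w = 0"
  then have "z * w = -1" by (simp add: add_eq_0_iff)
  with D_prod[OF \<open>norm z < 1\<close> \<open>norm w < 1\<close>] show False by simp
qed

theorem theorem4p6: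
  shows "biholomorphic2 (unit_disc \<times> unit_disc) Omega1"
  unfolding biholomorphic2_def
proof (intro exI conjI)
  show "holomorphic2_on Fm (unit_disc \<times> unit_disc)"
  proof (rule holo2I)
    fix x assume "x \<in> unit_disc \<times> unit_disc"
    then have nz: "1 + fst x * snd x \<noteq> 0"
      by (intro D_nz) (auto simp: unit_disc_def)
    show "CD (\<lambda>x. fst (Fm x)) x \<and> CD (\<lambda>x. snd (Fm x)) x"
      unfolding Fm_alt fst_conv snd_conv
      using nz by (intro conjI CD_divide CD_add CD_diff CD_mult CD_const CD_fst CD_snd) auto
  qed
  show "holomorphic2_on Gm Omega1"
  proof (rule holo2I)
    fix x assume x: "x \<in> Omega1"
    obtain u v where xe: "x = (u, v)" by (cases x)
    have n1: "1 - fst x * fst x - snd x * snd x \<notin> \<real>\<^sub>\<le>\<^sub>0"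
      using Omega_notin[of u v] x xe by (simp add: power2_eq_square)
    have n2: "1 + csqrt (1 - fst x * fst x - snd x * snd x) \<noteq> 0"
      by (rule Rpos_facts(1)[OF Re_csqrt_pos[OF n1]])
    show "CD (\<lambda>x. fst (Gm x)) x \<and> CD (\<lambda>x. snd (Gm x)) x"
      unfolding Gm_alt fst_conv snd_conv
      using n1 n2 by (intro conjI CD_divide CD_add CD_diff CD_mult CD_const CD_fst CD_snd CD_csqrt) auto
  qed
  have "Fm (z, w) \<in> Omega1" if "z \<in> unit_disc" "w \<in> unit_disc" for z w
  proof -
    have a: "norm z < 1" "norm w < 1" using that by (auto simp: unit_disc_def)
    have "(1 - (norm z)^2) * (1 - (norm w)^2) > 0"
      using a by (intro mult_pos_pos) (simp_all add: abs_square_less_1)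
    then show "Fm (z, w) \<in> Omega1" using Fm_Omega[OF D_nz[OF a]] by simp
  qed
  then show "Fm ` (unit_disc \<times> unit_disc) \<subseteq> Omega1" by auto
  have "Gm (u, v) \<in> unit_disc \<times> unit_disc" if uv: "(u, v) \<in> Omega1" for u v
  proof -
    obtain z w where G: "Gm (u, v) = (z, w)" by (cases "Gm (u, v)")
    have f: "Fm (z, w) \<in> Omega1" using FG(1)[OF uv] uv G by simp
    have nz: "1 + z * w \<noteq> 0" using FG(2)[OF uv] G by simp
    have zw: "norm z * norm w < 1" using FG(3)[OF uv] G by (simp add: norm_mult)
    have pr: "(1 - (norm z)^2) * (1 - (norm w)^2) > 0" using Fm_Omega[OF nz] f by simp
    have "norm z < 1 \<and> norm w < 1"
    proof (rule ccontr)
      assume "\<not> (norm z < 1 \<and> norm w < 1)"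
      then have "1 - (norm z)^2 \<le> 0 \<or> 1 - (norm w)^2 \<le> 0"
        by (auto simp: abs_square_le_1 not_less)
      then have "1 - (norm z)^2 < 0 \<and> 1 - (norm w)^2 < 0" using pr
        by (auto simp: zero_less_mult_iff)
      then have "norm z > 1" "norm w > 1"
        by (metis abs_norm_cancel abs_square_le_1 diff_less_0_iff_less not_le)+
      then have "norm z * norm w > 1"
        by (metis less_trans mult_strict_right_mono mult_1 zero_less_one)
      with zw show False by simp
    qed
    then show "Gm (u, v) \<in> unit_disc \<times> unit_disc" using G by (simp add: unit_disc_def)
  qed
  note gin = this
  show "Gm ` Omega1 \<subseteq> unit_disc \<times> unit_disc"
  proof (rule image_subsetI)
    fix x assume "x \<in> Omega1"
    then show "Gm x \<in> unit_disc \<times> unit_disc" using gin[of "fst x" "snd x"] by simp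
  qed
  show "\<forall>z\<in>unit_disc \<times> unit_disc. Gm (Fm z) = z"
    by (auto simp: unit_disc_def intro!: GF)
  show "\<forall>w\<in>Omega1. Fm (Gm w) = w"
    using FG(1) by auto
qed

end
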